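(* Let $\{(\mathbf{x}_i,y_i)\}_{i=1}^n$ be an arbitrary data set with $\mathbf{x}_i\in\mathbb{R}^d$, $y_i\in\mathbb{R}$. Let $k\ge 2d$ and fix $\mathbf{v}\in\mathbb{R}^k$ having at least $d$ strictly positive entries and at least $d$ strictly negative entries. Consider, as a function of $\mathbf{W}\in\mathbb{R}^{k\times d}$ (with rows $\mathbf{w}_1^T,\dots,\mathbf{w}_k^T$), the loss $$\mathcal{L}(\mathbf{W})=\frac{1}{2n}\sum_{i=1}^n\Big(y_i-\sum_{\ell=1}^k v_\ell\,\langle \mathbf{w}_\ell,\mathbf{x}_i\rangle^2\Big)^2 .$$ Then: (i) every local minimum of $\mathcal{L}$ is a global minimum; (ii) at every saddle point $\mathbf{W}_s$ there is a direction $\mathbf{U}\in\mathbb{R}^{k\times d}$ with $\mathrm{vect}(\mathbf{U})^T\nabla^2\mathcal{L}(\mathbf{W}_s)\mathrm{vect}(\mathbf{U})<0$. Moreover, there is a numerical constant $c>0$ such that whenever $d\le n\le c d^2$, for Lebesgue-almost every choice of inputs $(\mathbf{x}_1,\dots,\mathbf{x}_n)\in(\mathbb{R}^d)^n$ (and arbitrary labels), the global minimum value of $\mathcal{L}$ equals $0$.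
   Context: This is the loss of a one-hidden-layer network $\mathbf{x}\mapsto \mathbf{v}^T\phi(\mathbf{W}\mathbf{x})$ with quadratic activation $\phi(z)=z^2$ applied entrywise, with the output weights $\mathbf{v}$ held fixed. $\mathrm{vect}(\mathbf{U})$ denotes the vectorization of $\mathbf{U}$ and $\nabla^2\mathcal{L}$ the Hessian with respect to $\mathrm{vect}(\mathbf{W})$. *)

theory Defs
  imports "HOL-Analysis.Analysis"
begin

text \<open>Conventions: indices are 0-based. Data points: x i j is the j-th coordinate
 of x_i (i < n, j < d); labels y i (i < n); output weights v l (l < k);
 weight matrix W l j is entry (l,j) of W in R^(k x d), i.e. row l is w_l.
 Values outside these index ranges are irrelevant.\<close>

definition quad_loss ::
  "nat \<Rightarrow> nat \<Rightarrow> nat \<Rightarrow> (nat \<Rightarrow> real) \<Rightarrow> (nat \<Rightarrow> nat \<Rightarrow> real) \<Rightarrow> (nat \<Rightarrow> real)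
   \<Rightarrow> (nat \<Rightarrow> nat \<Rightarrow> real) \<Rightarrow> real" where
  "quad_loss n d k v x y W =
     1 / (2 * real n) *
     (\<Sum>i<n. (y i - (\<Sum>l<k. v l * (\<Sum>j<d. W l j * x i j)\<^sup>2))\<^sup>2)"

definition is_local_min ::
  "nat \<Rightarrow> nat \<Rightarrow> ((nat \<Rightarrow> nat \<Rightarrow> real) \<Rightarrow> real) \<Rightarrow> (nat \<Rightarrow> nat \<Rightarrow> real) \<Rightarrow> bool" where
  "is_local_min k d f W \<longleftrightarrow>
     (\<exists>\<epsilon>>0. \<forall>W'. (\<Sum>l<k. \<Sum>j<d. (W' l j - W l j)\<^sup>2) < \<epsilon>\<^sup>2 \<longrightarrow> f W \<le> f W')"

definition is_local_max ::
  "nat \<Rightarrow> nat \<Rightarrow> ((nat \<Rightarrow> nat \<Rightarrow> real) \<Rightarrow> real) \<Rightarrow> (nat \<Rightarrow> nat \<Rightarrow> real) \<Rightarrow> bool" where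
  "is_local_max k d f W \<longleftrightarrow>
     (\<exists>\<epsilon>>0. \<forall>W'. (\<Sum>l<k. \<Sum>j<d. (W' l j - W l j)\<^sup>2) < \<epsilon>\<^sup>2 \<longrightarrow> f W' \<le> f W)"

definition is_global_min :: "((nat \<Rightarrow> nat \<Rightarrow> real) \<Rightarrow> real) \<Rightarrow> (nat \<Rightarrow> nat \<Rightarrow> real) \<Rightarrow> bool" where
  "is_global_min f W \<longleftrightarrow> (\<forall>W'. f W \<le> f W')"

definition partial ::
  "((nat \<Rightarrow> nat \<Rightarrow> real) \<Rightarrow> real) \<Rightarrow> nat \<Rightarrow> nat \<Rightarrow> (nat \<Rightarrow> nat \<Rightarrow> real) \<Rightarrow> real" where
  "partial f a b W = deriv (\<lambda>t. f (W(a := (W a)(b := t)))) (W a b)"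

definition hessian ::
  "((nat \<Rightarrow> nat \<Rightarrow> real) \<Rightarrow> real) \<Rightarrow> (nat \<Rightarrow> nat \<Rightarrow> real) \<Rightarrow> nat \<times> nat \<Rightarrow> nat \<times> nat \<Rightarrow> real" where
  "hessian f W p q = partial (partial f (fst q) (snd q)) (fst p) (snd p) W"

definition hessian_quad ::
  "nat \<Rightarrow> nat \<Rightarrow> ((nat \<Rightarrow> nat \<Rightarrow> real) \<Rightarrow> real) \<Rightarrow> (nat \<Rightarrow> nat \<Rightarrow> real) \<Rightarrow> (nat \<Rightarrow> nat \<Rightarrow> real) \<Rightarrow> real" where
  "hessian_quad k d f W U =
     (\<Sum>a<k. \<Sum>b<d. \<Sum>a'<k. \<Sum>b'<d. U a b * hessian f W (a, b) (a', b') * U a' b')"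

definition is_critical ::
  "nat \<Rightarrow> nat \<Rightarrow> ((nat \<Rightarrow> nat \<Rightarrow> real) \<Rightarrow> real) \<Rightarrow> (nat \<Rightarrow> nat \<Rightarrow> real) \<Rightarrow> bool" where
  "is_critical k d f W \<longleftrightarrow> (\<forall>a<k. \<forall>b<d. partial f a b W = 0)"

definition is_saddle ::
  "nat \<Rightarrow> nat \<Rightarrow> ((nat \<Rightarrow> nat \<Rightarrow> real) \<Rightarrow> real) \<Rightarrow> (nat \<Rightarrow> nat \<Rightarrow> real) \<Rightarrow> bool" where
  "is_saddle k d f W \<longleftrightarrow> is_critical k d f W \<and> \<not> is_local_min k d f W \<and> \<not> is_local_max k d f W"

end

theory Submission
  imports Defs "Jordan_Normal_Form.Determinant"
begin

definition sfun :: "nat \<Rightarrow> (nat \<Rightarrow> nat \<Rightarrow> real) \<Rightarrow> (nat \<Rightarrow> nat \<Rightarrow> real) \<Rightarrow> nat \<Rightarrow> nat \<Rightarrow> real" where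
  "sfun d x W i l = (\<Sum>j<d. W l j * x i j)"

definition resid :: "nat \<Rightarrow> nat \<Rightarrow> (nat \<Rightarrow> real) \<Rightarrow> (nat \<Rightarrow> nat \<Rightarrow> real) \<Rightarrow> (nat \<Rightarrow> real)
   \<Rightarrow> (nat \<Rightarrow> nat \<Rightarrow> real) \<Rightarrow> nat \<Rightarrow> real" where
  "resid d k v x y W i = y i - (\<Sum>l<k. v l * (sfun d x W i l)\<^sup>2)"

lemma quad_loss_alt: "quad_loss n d k v x y W = 1 / (2 * real n) * (\<Sum>i<n. (resid d k v x y W i)\<^sup>2)"
  unfolding quad_loss_def resid_def sfun_def by simp

definition Pd where
  "Pd n d k v x y a b W = -(2 / real n) * (\<Sum>i<n. resid d k v x y W i * v a * sfun d x W i a * x i b)"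

lemma sfun_upd:
  assumes "b < d"
  shows "sfun d x (W(a := (W a)(b := t))) i l = sfun d x W i l + (if l = a then (t - W a b) * x i b else 0)"
proof (cases "l = a")
  case True
  have "(\<Sum>j<d. (if j = b then t else W a j) * x i j) = (\<Sum>j<d. W a j * x i j + (if j = b then (t - W a b) * x i b else 0))"
    by (rule sum.cong) (auto simp: algebra_simps)
  also have "\<dots> = (\<Sum>j<d. W a j * x i j) + (t - W a b) * x i b"
    using assms by (simp add: sum.distrib)
  finally show ?thesis using True by (simp add: sfun_def)
qed (simp add: sfun_def)

lemma resid_upd:
  assumes "b < d" "a < k"
  shows "resid d k v x y (W(a := (W a)(b := t))) i =
     resid d k v x y W i - v a * ((sfun d x W i a + (t - W a b) * x i b)\<^sup>2 - (sfun d x W i a)\<^sup>2)"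
proof -
  have "(\<Sum>l<k. v l * (sfun d x (W(a := (W a)(b := t))) i l)\<^sup>2)
     = (\<Sum>l<k. v l * (sfun d x W i l)\<^sup>2 + (if l = a then v a * ((sfun d x W i a + (t - W a b) * x i b)\<^sup>2 - (sfun d x W i a)\<^sup>2) else 0))"
    by (rule sum.cong) (auto simp: sfun_upd[OF assms(1)] algebra_simps)
  also have "\<dots> = (\<Sum>l<k. v l * (sfun d x W i l)\<^sup>2) + v a * ((sfun d x W i a + (t - W a b) * x i b)\<^sup>2 - (sfun d x W i a)\<^sup>2)"
    using assms by (simp add: sum.distrib)
  finally show ?thesis unfolding resid_def by simp
qed

lemma deriv_loss:
  assumes "b < d" "a < k"
  shows "((\<lambda>t. quad_loss n d k v x y (W(a := (W a)(b := t)))) has_real_derivative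
            Pd n d k v x y a b (W(a := (W a)(b := t0)))) (at t0)"
proof -
  let ?s = "\<lambda>i. sfun d x W i a" and ?r = "\<lambda>i. resid d k v x y W i"
  have eq: "(\<lambda>t. quad_loss n d k v x y (W(a := (W a)(b := t)))) =
    (\<lambda>t. 1 / (2 * real n) * (\<Sum>i<n. (?r i - v a * ((?s i + (t - W a b) * x i b)\<^sup>2 - (?s i)\<^sup>2))\<^sup>2))"
    by (simp add: quad_loss_alt resid_upd[OF assms])
  show ?thesis unfolding eq Pd_def resid_upd[OF assms] sfun_upd[OF assms(1)]
    apply (rule derivative_eq_intros refl)+
    apply (simp add: sum_divide_distrib sum_distrib_left)
    apply (rule sum.cong, simp)
    apply (cases "n = 0", simp)
    apply (simp add: field_simps)
    done
qed

lemma partial_loss: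
  assumes "b < d" "a < k"
  shows "partial (quad_loss n d k v x y) a b W = Pd n d k v x y a b W"
  unfolding partial_def using DERIV_imp_deriv[OF deriv_loss[OF assms, of n v x y W "W a b"]] by simp

definition Hd where
  "Hd n d k v x y a b a' b' W = -(2 / real n) * (\<Sum>i<n.
     - 2 * v a * sfun d x W i a * x i b * v a' * sfun d x W i a' * x i b'
     + resid d k v x y W i * v a' * (if a' = a then x i b * x i b' else 0))"

lemma deriv_Pd:
  assumes "b < d" "a < k"
  shows "((\<lambda>t. Pd n d k v x y a' b' (W(a := (W a)(b := t)))) has_real_derivative
            Hd n d k v x y a b a' b' (W(a := (W a)(b := t0)))) (at t0)"
proof (cases "a' = a")
  case True
  show ?thesis unfolding Hd_def Pd_def resid_upd[OF assms] sfun_upd[OF assms(1)] True if_P[OF refl] sum_distrib_left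
    apply (rule derivative_eq_intros refl)+
    apply (rule sum.cong, simp)
    apply (simp add: field_simps power2_eq_square)
    done
next
  case False
  show ?thesis unfolding Hd_def Pd_def resid_upd[OF assms] sfun_upd[OF assms(1)] if_not_P[OF False] sum_distrib_left
    apply (rule derivative_eq_intros refl)+
    apply (rule sum.cong, simp)
    apply (simp add: field_simps power2_eq_square)
    done
qed

lemma hessian_loss:
  assumes "b < d" "a < k" "b' < d" "a' < k"
  shows "hessian (quad_loss n d k v x y) W (a, b) (a', b') = Hd n d k v x y a b a' b' W"
proof -
  have eq: "partial (quad_loss n d k v x y) a' b' = Pd n d k v x y a' b'"
    using partial_loss[OF assms(3,4)] by blast
  have "hessian (quad_loss n d k v x y) W (a, b) (a', b') = partial (Pd n d k v x y a' b') a b W"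
    by (simp only: hessian_def fst_conv snd_conv eq)
  also have "\<dots> = Hd n d k v x y a b a' b' W"
    unfolding partial_def
    using DERIV_imp_deriv[OF deriv_Pd[OF assms(1,2), of n v x y a' b' W "W a b"]] by simp
  finally show ?thesis .
qed

lemma quadsum1:
  fixes g :: "nat \<Rightarrow> nat \<Rightarrow> nat \<Rightarrow> real" and U :: "nat \<Rightarrow> nat \<Rightarrow> real"
  shows "(\<Sum>a<k. \<Sum>b<d. \<Sum>a'<k. \<Sum>b'<d. U a b * (\<Sum>i<n. g i a b * g i a' b') * U a' b')
       = (\<Sum>i<n. (\<Sum>a<k. \<Sum>b<d. U a b * g i a b)\<^sup>2)"
proof -
  have "(\<Sum>i<n. (\<Sum>a<k. \<Sum>b<d. U a b * g i a b)\<^sup>2) = 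
     (\<Sum>i<n. \<Sum>a<k. \<Sum>b<d. \<Sum>a'<k. \<Sum>b'<d. U a' b' * g i a' b' * (U a b * g i a b))"
    by (simp add: power2_eq_square sum_distrib_left sum_distrib_right)
  also have "\<dots> = (\<Sum>a<k. \<Sum>b<d. \<Sum>a'<k. \<Sum>b'<d. \<Sum>i<n. U a' b' * g i a' b' * (U a b * g i a b))"
    by (simp only: sum.swap[where A="{..<n}"])
  also have "\<dots> = (\<Sum>a<k. \<Sum>b<d. \<Sum>a'<k. \<Sum>b'<d. U a b * (\<Sum>i<n. g i a b * g i a' b') * U a' b')"
    by (simp add: sum_distrib_left sum_distrib_right mult_ac)
  finally show ?thesis by simp
qed

lemma quadsum2:
  fixes h :: "nat \<Rightarrow> nat \<Rightarrow> nat \<Rightarrow> real" and U :: "nat \<Rightarrow> nat \<Rightarrow> real"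
  shows "(\<Sum>a<k. \<Sum>b<d. \<Sum>a'<k. \<Sum>b'<d. U a b * (if a' = a then h a b b' else 0) * U a' b')
       = (\<Sum>a<k. \<Sum>b<d. \<Sum>b'<d. U a b * h a b b' * U a b')"
proof (rule sum.cong[OF refl], rule sum.cong[OF refl])
  fix a b assume a: "a \<in> {..<k}"
  have "(\<Sum>a'<k. \<Sum>b'<d. U a b * (if a' = a then h a b b' else 0) * U a' b')
     = (\<Sum>a'<k. if a' = a then (\<Sum>b'<d. U a b * h a b b' * U a b') else 0)"
    by (rule sum.cong) auto
  also have "\<dots> = (\<Sum>b'<d. U a b * h a b b' * U a b')"
    using a by (simp add: sum.delta)
  finally show "(\<Sum>a'<k. \<Sum>b'<d. U a b * (if a' = a then h a b b' else 0) * U a' b') = (\<Sum>b'<d. U a b * h a b b' * U a b')" .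
qed

lemma Hd_split:
  "Hd n d k v x y a b a' b' W =
     4 / real n * (\<Sum>i<n. (v a * sfun d x W i a * x i b) * (v a' * sfun d x W i a' * x i b'))
     + (if a' = a then -(2 / real n) * v a * (\<Sum>i<n. resid d k v x y W i * x i b * x i b') else 0)"
  unfolding Hd_def
  by (cases "a' = a") (simp_all add: sum.distrib sum_distrib_left algebra_simps sum_negf sum_subtractf)

lemma hessian_quad_formula:
  "hessian_quad k d (quad_loss n d k v x y) W U =
     4 / real n * (\<Sum>i<n. (\<Sum>a<k. \<Sum>b<d. U a b * (v a * sfun d x W i a * x i b))\<^sup>2)
     - 2 / real n * (\<Sum>a<k. v a * (\<Sum>i<n. resid d k v x y W i * (\<Sum>b<d. U a b * x i b)\<^sup>2))"
proof -
  let ?g = "\<lambda>i a b. v a * sfun d x W i a * x i b"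
  let ?h = "\<lambda>a b b'. -(2 / real n) * v a * (\<Sum>i<n. resid d k v x y W i * x i b * x i b')"
  have "hessian_quad k d (quad_loss n d k v x y) W U =
     (\<Sum>a<k. \<Sum>b<d. \<Sum>a'<k. \<Sum>b'<d. U a b * Hd n d k v x y a b a' b' W * U a' b')"
    unfolding hessian_quad_def by (intro sum.cong refl) (simp add: hessian_loss)
  also have "\<dots> = (\<Sum>a<k. \<Sum>b<d. \<Sum>a'<k. \<Sum>b'<d.
        4 / real n * (U a b * (\<Sum>i<n. ?g i a b * ?g i a' b') * U a' b')
      + U a b * (if a' = a then ?h a b b' else 0) * U a' b')"
    unfolding Hd_split by (intro sum.cong refl) (simp add: algebra_simps)
  also have "\<dots> = 4 / real n * (\<Sum>a<k. \<Sum>b<d. \<Sum>a'<k. \<Sum>b'<d. U a b * (\<Sum>i<n. ?g i a b * ?g i a' b') * U a' b')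
      + (\<Sum>a<k. \<Sum>b<d. \<Sum>a'<k. \<Sum>b'<d. U a b * (if a' = a then ?h a b b' else 0) * U a' b')"
    by (simp add: sum.distrib sum_distrib_left)
  also have "\<dots> = 4 / real n * (\<Sum>i<n. (\<Sum>a<k. \<Sum>b<d. U a b * ?g i a b)\<^sup>2)
      + (\<Sum>a<k. \<Sum>b<d. \<Sum>b'<d. U a b * ?h a b b' * U a b')"
    by (simp only: quadsum1 quadsum2)
  also have "(\<Sum>a<k. \<Sum>b<d. \<Sum>b'<d. U a b * ?h a b b' * U a b') =
      - 2 / real n * (\<Sum>a<k. v a * (\<Sum>i<n. resid d k v x y W i * (\<Sum>b<d. U a b * x i b)\<^sup>2))"
  proof -
    have "\<And>a. (\<Sum>i<n. resid d k v x y W i * (\<Sum>b<d. U a b * x i b)\<^sup>2) =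
       (\<Sum>b<d. \<Sum>b'<d. U a b * (\<Sum>i<n. resid d k v x y W i * x i b * x i b') * U a b')"
    proof -
      fix a
      have "(\<Sum>i<n. resid d k v x y W i * (\<Sum>b<d. U a b * x i b)\<^sup>2) =
        (\<Sum>i<n. \<Sum>b<d. \<Sum>b'<d. U a b * (resid d k v x y W i * x i b * x i b') * U a b')"
        by (rule sum.cong[OF refl]) (simp add: power2_eq_square sum_distrib_left sum_distrib_right algebra_simps)
      also have "\<dots> = (\<Sum>b<d. \<Sum>b'<d. \<Sum>i<n. U a b * (resid d k v x y W i * x i b * x i b') * U a b')"
        by (simp only: sum.swap[where A="{..<n}"])
      also have "\<dots> = (\<Sum>b<d. \<Sum>b'<d. U a b * (\<Sum>i<n. resid d k v x y W i * x i b * x i b') * U a b')"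
        by (simp add: sum_distrib_left sum_distrib_right)
      finally show "?thesis a" .
    qed
    then show ?thesis
      by (simp add: sum_distrib_left sum_distrib_right algebra_simps)
  qed
  finally show ?thesis by simp
qed

lemma homog_system:
  fixes A :: "nat \<Rightarrow> nat \<Rightarrow> real"
  assumes "finite J" "card J > m"
  shows "\<exists>\<beta>. (\<exists>j\<in>J. \<beta> j \<noteq> 0) \<and> (\<forall>i<m. (\<Sum>j\<in>J. A i j * \<beta> j) = 0)"
  using assms
proof (induction m arbitrary: J A)
  case 0
  then obtain j where "j \<in> J" by (metis card.empty card_gt_0_iff equals0I less_irrefl)
  then show ?case by (intro exI[of _ "\<lambda>_. 1"]) auto
next
  case (Suc m)
  show ?case
  proof (cases "\<forall>j\<in>J. A m j = 0")
    case True
    from Suc.IH[of J A] Suc.prems obtain \<beta> where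
      b: "\<exists>j\<in>J. \<beta> j \<noteq> 0" "\<forall>i<m. (\<Sum>j\<in>J. A i j * \<beta> j) = 0" by auto
    have "\<forall>i<Suc m. (\<Sum>j\<in>J. A i j * \<beta> j) = 0"
      using b(2) True by (auto simp: less_Suc_eq)
    with b(1) show ?thesis by blast
  next
    case False
    then obtain j0 where j0: "j0 \<in> J" "A m j0 \<noteq> 0" by blast
    define J' where "J' = J - {j0}"
    define A' where "A' = (\<lambda>i j. A i j - A i j0 * A m j / A m j0)"
    have fin': "finite J'" using Suc.prems J'_def by auto
    have card': "card J' > m" using Suc.prems j0 unfolding J'_def by (simp add: card_Diff_singleton)
    from Suc.IH[OF fin' card', of A'] obtain \<beta>' where
      b: "\<exists>j\<in>J'. \<beta>' j \<noteq> 0" "\<forall>i<m. (\<Sum>j\<in>J'. A' i j * \<beta>' j) = 0" by auto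
    define \<beta> where "\<beta> = (\<lambda>j. if j = j0 then - (\<Sum>j\<in>J'. A m j * \<beta>' j) / A m j0 else \<beta>' j)"
    have split: "\<And>i. (\<Sum>j\<in>J. A i j * \<beta> j) = A i j0 * \<beta> j0 + (\<Sum>j\<in>J'. A i j * \<beta>' j)"
    proof -
      fix i
      have "(\<Sum>j\<in>J. A i j * \<beta> j) = A i j0 * \<beta> j0 + (\<Sum>j\<in>J'. A i j * \<beta> j)"
        unfolding J'_def using j0 Suc.prems(1) by (simp add: sum.remove)
      also have "(\<Sum>j\<in>J'. A i j * \<beta> j) = (\<Sum>j\<in>J'. A i j * \<beta>' j)"
        by (rule sum.cong) (auto simp: \<beta>_def J'_def)
      finally show "(\<Sum>j\<in>J. A i j * \<beta> j) = A i j0 * \<beta> j0 + (\<Sum>j\<in>J'. A i j * \<beta>' j)" .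
    qed
    have "\<forall>i<Suc m. (\<Sum>j\<in>J. A i j * \<beta> j) = 0"
    proof (intro allI impI)
      fix i assume i: "i < Suc m"
      show "(\<Sum>j\<in>J. A i j * \<beta> j) = 0"
      proof (cases "i = m")
        case True
        show ?thesis unfolding split True using j0 by (simp add: \<beta>_def)
      next
        case False
        then have "i < m" using i by simp
        with b(2) have "(\<Sum>j\<in>J'. A' i j * \<beta>' j) = 0" by auto
        moreover have "(\<Sum>j\<in>J'. A' i j * \<beta>' j) = (\<Sum>j\<in>J'. A i j * \<beta>' j) - A i j0 / A m j0 * (\<Sum>j\<in>J'. A m j * \<beta>' j)"
          unfolding A'_def by (simp add: sum_subtractf sum_distrib_left algebra_simps)
        ultimately show ?thesis unfolding split using j0 by (simp add: \<beta>_def field_simps)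
      qed
    qed
    moreover have "\<exists>j\<in>J. \<beta> j \<noteq> 0"
      using b(1) unfolding J'_def \<beta>_def by auto
    ultimately show ?thesis by blast
  qed
qed

definition zx :: "nat \<Rightarrow> (nat \<Rightarrow> nat \<Rightarrow> real) \<Rightarrow> (nat \<Rightarrow> real) \<Rightarrow> nat \<Rightarrow> real" where
  "zx d x z i = (\<Sum>b<d. z b * x i b)"

definition Qf where
  "Qf n d k v x y W z = (\<Sum>i<n. resid d k v x y W i * (zx d x z i)\<^sup>2)"

lemma sfun_zx: "sfun d x W i l = zx d x (W l) i"
  unfolding sfun_def zx_def by simp

lemma global_min_of_Q0:
  assumes Q0: "\<And>z. Qf n d k v x y W z = 0"
  shows "is_global_min (quad_loss n d k v x y) W"
  unfolding is_global_min_def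
proof
  fix W'
  let ?r = "resid d k v x y W" and ?r' = "resid d k v x y W'"
  define \<delta> where "\<delta> i = (\<Sum>l<k. v l * ((zx d x (W' l) i)\<^sup>2 - (zx d x (W l) i)\<^sup>2))" for i
  have rr: "?r' i = ?r i - \<delta> i" for i
    unfolding resid_def \<delta>_def sfun_zx by (simp add: sum_subtractf algebra_simps)
  have "(\<Sum>i<n. ?r i * \<delta> i) = (\<Sum>i<n. \<Sum>l<k. v l * (?r i * (zx d x (W' l) i)\<^sup>2 - ?r i * (zx d x (W l) i)\<^sup>2))"
    unfolding \<delta>_def by (simp add: sum_distrib_left algebra_simps)
  also have "\<dots> = (\<Sum>l<k. \<Sum>i<n. v l * (?r i * (zx d x (W' l) i)\<^sup>2 - ?r i * (zx d x (W l) i)\<^sup>2))"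
    by (rule sum.swap)
  also have "\<dots> = (\<Sum>l<k. v l * (Qf n d k v x y W (W' l) - Qf n d k v x y W (W l)))"
    unfolding Qf_def by (simp add: sum_distrib_left[symmetric] sum_subtractf)
  also have "\<dots> = 0" using Q0 by simp
  finally have rd: "(\<Sum>i<n. ?r i * \<delta> i) = 0" .
  have "(\<Sum>i<n. (?r' i)\<^sup>2) = (\<Sum>i<n. (?r i)\<^sup>2) - 2 * (\<Sum>i<n. ?r i * \<delta> i) + (\<Sum>i<n. (\<delta> i)\<^sup>2)"
    unfolding rr by (simp add: power2_eq_square algebra_simps sum.distrib sum_subtractf sum_distrib_left)
  also have "\<dots> \<ge> (\<Sum>i<n. (?r i)\<^sup>2)" using rd by (simp add: sum_nonneg)
  finally have "(\<Sum>i<n. (?r i)\<^sup>2) \<le> (\<Sum>i<n. (?r' i)\<^sup>2)" .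
  then show "quad_loss n d k v x y W \<le> quad_loss n d k v x y W'"
    unfolding quad_loss_alt by (intro mult_left_mono) auto
qed

lemma local_min_crit:
  assumes lm: "is_local_min k d (quad_loss n d k v x y) W" and ab: "a < k" "b < d"
  shows "Pd n d k v x y a b W = 0"
proof -
  obtain e where e: "e > 0" "\<And>W'. (\<Sum>l<k. \<Sum>j<d. (W' l j - W l j)\<^sup>2) < e\<^sup>2 \<Longrightarrow>
      quad_loss n d k v x y W \<le> quad_loss n d k v x y W'"
    using lm unfolding is_local_min_def by blast
  have D: "((\<lambda>t. quad_loss n d k v x y (W(a := (W a)(b := t)))) has_real_derivative Pd n d k v x y a b W) (at (W a b))"
    using deriv_loss[OF ab(2) ab(1), of n v x y W "W a b"] by simp
  have "\<forall>t. \<bar>W a b - t\<bar> < e \<longrightarrow> quad_loss n d k v x y (W(a := (W a)(b := W a b))) \<le> quad_loss n d k v x y (W(a := (W a)(b := t)))"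
  proof (intro allI impI)
    fix t assume t: "\<bar>W a b - t\<bar> < e"
    have "(\<Sum>l<k. \<Sum>j<d. ((W(a := (W a)(b := t))) l j - W l j)\<^sup>2) = (\<Sum>l<k. if l = a then (t - W a b)\<^sup>2 else 0)"
    proof (rule sum.cong[OF refl])
      fix l assume "l \<in> {..<k}"
      show "(\<Sum>j<d. ((W(a := (W a)(b := t))) l j - W l j)\<^sup>2) = (if l = a then (t - W a b)\<^sup>2 else 0)"
      proof (cases "l = a")
        case True
        have "(\<Sum>j<d. ((W(a := (W a)(b := t))) l j - W l j)\<^sup>2) = (\<Sum>j<d. if j = b then (t - W a b)\<^sup>2 else 0)"
          by (rule sum.cong) (auto simp: True)
        then show ?thesis using ab True by simp
      qed simp
    qed
    also have "\<dots> = (t - W a b)\<^sup>2" using ab by simp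
    also have "\<dots> < e\<^sup>2" using t e(1)
      by (metis abs_minus_commute abs_of_pos power2_abs power_strict_mono zero_less_numeral abs_ge_zero)
    finally show "quad_loss n d k v x y (W(a := (W a)(b := W a b))) \<le> quad_loss n d k v x y (W(a := (W a)(b := t)))"
      using e(2) by simp
  qed
  then show ?thesis using DERIV_local_min[OF D e(1)] by simp
qed

lemma crit_cond:
  assumes "n > 0" "Pd n d k v x y a b W = 0" "v a \<noteq> 0"
  shows "(\<Sum>i<n. resid d k v x y W i * sfun d x W i a * x i b) = 0"
proof -
  have "(\<Sum>i<n. resid d k v x y W i * v a * sfun d x W i a * x i b) = v a * (\<Sum>i<n. resid d k v x y W i * sfun d x W i a * x i b)"
    by (simp add: sum_distrib_left algebra_simps)
  then show ?thesis using assms unfolding Pd_def by simp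
qed

lemma construct_beta:
  assumes crit: "\<forall>a<k. \<forall>b<d. Pd n d k v x y a b W = 0"
    and cp: "card {l. l < k \<and> v l > 0} \<ge> d" and cn: "card {l. l < k \<and> v l < 0} \<ge> d"
    and Q: "Qf n d k v x y W z \<noteq> 0"
  shows "\<exists>\<beta>. (\<forall>a. \<beta> a \<noteq> 0 \<longrightarrow> a < k \<and> v a * Qf n d k v x y W z > 0) \<and> (\<exists>a. \<beta> a \<noteq> 0)
           \<and> (\<forall>j<d. (\<Sum>a<k. \<beta> a * v a * W a j) = 0)"
proof -
  let ?q = "Qf n d k v x y W z" and ?r = "resid d k v x y W"
  have n: "n > 0" using Q unfolding Qf_def by (cases n) auto
  define g where "g b = (\<Sum>i<n. ?r i * zx d x z i * x i b)" for b
  have crit0: "(\<Sum>i<n. ?r i * sfun d x W i a * x i b) = 0" if "a < k" "v a \<noteq> 0" "b < d" for a b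
    using crit_cond[of n d k v x y a b W] n crit that by blast
  have gw: "(\<Sum>b<d. g b * W a b) = 0" if a: "a < k" "v a \<noteq> 0" for a
  proof -
    have "(\<Sum>b<d. g b * W a b) = (\<Sum>b<d. \<Sum>i<n. ?r i * zx d x z i * (W a b * x i b))"
      unfolding g_def by (simp add: sum_distrib_right sum_distrib_left algebra_simps)
    also have "\<dots> = (\<Sum>i<n. \<Sum>b<d. ?r i * zx d x z i * (W a b * x i b))"
      by (rule sum.swap)
    also have "\<dots> = (\<Sum>i<n. ?r i * zx d x z i * sfun d x W i a)"
      unfolding sfun_def by (simp add: sum_distrib_left)
    also have "\<dots> = (\<Sum>i<n. \<Sum>b<d. z b * (?r i * sfun d x W i a * x i b))"
      unfolding zx_def by (rule sum.cong[OF refl]) (simp add: sum_distrib_left sum_distrib_right algebra_simps)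
    also have "\<dots> = (\<Sum>b<d. z b * (\<Sum>i<n. ?r i * sfun d x W i a * x i b))"
      by (subst sum.swap) (simp add: sum_distrib_left)
    also have "\<dots> = 0" using crit0[OF a] by simp
    finally show ?thesis .
  qed
  have gz: "(\<Sum>b<d. g b * z b) = ?q"
  proof -
    have "(\<Sum>b<d. g b * z b) = (\<Sum>b<d. \<Sum>i<n. ?r i * zx d x z i * (z b * x i b))"
      unfolding g_def by (simp add: sum_distrib_right sum_distrib_left algebra_simps)
    also have "\<dots> = (\<Sum>i<n. \<Sum>b<d. ?r i * zx d x z i * (z b * x i b))"
      by (rule sum.swap)
    also have "\<dots> = ?q"
      unfolding Qf_def by (simp add: sum_distrib_left[symmetric] zx_def[symmetric] power2_eq_square mult.assoc)
    finally show ?thesis .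
  qed
  have gpos: "(\<Sum>b<d. (g b)\<^sup>2) > 0"
  proof -
    obtain b where b: "b < d" "g b \<noteq> 0"
    proof (rule ccontr)
      assume "\<not> thesis"
      then have "\<forall>b<d. g b = 0" using that by blast
      then have "(\<Sum>b<d. g b * z b) = 0" by simp
      with gz Q show False by simp
    qed
    show ?thesis by (rule sum_pos2[of _ b]) (use b in auto)
  qed
  define J0 where "J0 = {a. a < k \<and> v a * ?q > 0}"
  have J0card: "card J0 \<ge> d"
  proof (cases "?q > 0")
    case True
    then have "J0 = {l. l < k \<and> v l > 0}" unfolding J0_def by (auto simp: zero_less_mult_iff)
    with cp show ?thesis by simp
  next
    case False
    with Q have "?q < 0" by simp
    then have "J0 = {l. l < k \<and> v l < 0}" unfolding J0_def by (auto simp: zero_less_mult_iff)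
    with cn show ?thesis by simp
  qed
  have finJ0: "finite J0" unfolding J0_def by auto
  have kJ0: "k \<notin> J0" unfolding J0_def by auto
  have J0v: "a \<in> J0 \<Longrightarrow> a < k \<and> v a \<noteq> 0" for a unfolding J0_def by auto
  define A where "A b j = (if j = k then g b else v j * W j b)" for b j
  have "card (insert k J0) > d" using J0card finJ0 kJ0 by simp
  from homog_system[OF _ this, of A] finJ0 obtain \<beta>' where
    b1: "\<exists>j\<in>insert k J0. \<beta>' j \<noteq> 0" and b2: "\<forall>b<d. (\<Sum>j\<in>insert k J0. A b j * \<beta>' j) = 0" by auto
  have eqs: "\<beta>' k * g b + (\<Sum>j\<in>J0. v j * W j b * \<beta>' j) = 0" if "b < d" for b
  proof -
    have "(\<Sum>j\<in>J0. A b j * \<beta>' j) = (\<Sum>j\<in>J0. v j * W j b * \<beta>' j)"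
      by (rule sum.cong) (use kJ0 in \<open>auto simp: A_def\<close>)
    moreover have "(\<Sum>j\<in>insert k J0. A b j * \<beta>' j) = A b k * \<beta>' k + (\<Sum>j\<in>J0. A b j * \<beta>' j)"
      using finJ0 kJ0 by simp
    ultimately show ?thesis using b2 that by (simp add: A_def mult.commute)
  qed
  have "0 = (\<Sum>b<d. g b * (\<beta>' k * g b + (\<Sum>j\<in>J0. v j * W j b * \<beta>' j)))"
    using eqs by simp
  also have "\<dots> = \<beta>' k * (\<Sum>b<d. (g b)\<^sup>2) + (\<Sum>b<d. \<Sum>j\<in>J0. v j * \<beta>' j * (g b * W j b))"
    by (simp add: sum.distrib sum_distrib_left distrib_left power2_eq_square algebra_simps)
  also have "(\<Sum>b<d. \<Sum>j\<in>J0. v j * \<beta>' j * (g b * W j b)) = (\<Sum>j\<in>J0. v j * \<beta>' j * (\<Sum>b<d. g b * W j b))"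
    by (subst sum.swap) (simp add: sum_distrib_left)
  also have "\<dots> = 0" using gw J0v by simp
  finally have "\<beta>' k = 0" using gpos by simp
  define \<beta> where "\<beta> a = (if a \<in> J0 then \<beta>' a else 0)" for a
  have "\<forall>a. \<beta> a \<noteq> 0 \<longrightarrow> a < k \<and> v a * ?q > 0" unfolding \<beta>_def J0_def by auto
  moreover have "\<exists>a. \<beta> a \<noteq> 0" using b1 \<open>\<beta>' k = 0\<close> unfolding \<beta>_def by auto
  moreover have "\<forall>j<d. (\<Sum>a<k. \<beta> a * v a * W a j) = 0"
  proof (intro allI impI)
    fix j assume j: "j < d"
    have "(\<Sum>a<k. \<beta> a * v a * W a j) = (\<Sum>a<k. if a \<in> J0 then v a * W a j * \<beta>' a else 0)"
      unfolding \<beta>_def by (rule sum.cong) auto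
    also have "\<dots> = (\<Sum>a\<in>{..<k} \<inter> J0. v a * W a j * \<beta>' a)"
      by (simp add: sum.inter_restrict)
    also have "{..<k} \<inter> J0 = J0" unfolding J0_def by auto
    also have "(\<Sum>a\<in>J0. v a * W a j * \<beta>' a) = 0" using eqs[OF j] \<open>\<beta>' k = 0\<close> by simp
    finally show "(\<Sum>a<k. \<beta> a * v a * W a j) = 0" .
  qed
  ultimately show ?thesis by blast
qed

locale descent_setup =
  fixes n d k :: nat and v :: "nat \<Rightarrow> real" and x :: "nat \<Rightarrow> nat \<Rightarrow> real" and y :: "nat \<Rightarrow> real"
    and W :: "nat \<Rightarrow> nat \<Rightarrow> real" and z :: "nat \<Rightarrow> real" and \<beta> :: "nat \<Rightarrow> real"
  assumes hb1: "\<And>a. \<beta> a \<noteq> 0 \<Longrightarrow> a < k \<and> v a * Qf n d k v x y W z > 0"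
    and hb2: "\<exists>a. \<beta> a \<noteq> 0"
    and hb3: "\<And>j. j < d \<Longrightarrow> (\<Sum>a<k. \<beta> a * v a * W a j) = 0"
begin

abbreviation "q \<equiv> Qf n d k v x y W z"
definition "c = (\<Sum>a<k. v a * (\<beta> a)\<^sup>2)"

lemma key: "(\<Sum>a<k. \<beta> a * v a * sfun d x W i a) = 0"
proof -
  have "(\<Sum>a<k. \<beta> a * v a * sfun d x W i a) = (\<Sum>a<k. \<Sum>j<d. x i j * (\<beta> a * v a * W a j))"
    unfolding sfun_def by (simp add: sum_distrib_left algebra_simps)
  also have "\<dots> = (\<Sum>j<d. x i j * (\<Sum>a<k. \<beta> a * v a * W a j))"
    by (subst sum.swap) (simp add: sum_distrib_left)
  also have "\<dots> = 0" using hb3 by simp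
  finally show ?thesis .
qed

lemma cq: "c * q > 0"
proof -
  obtain a0 where a0: "\<beta> a0 \<noteq> 0" using hb2 by blast
  have "c * q = (\<Sum>a<k. (v a * q) * (\<beta> a)\<^sup>2)" unfolding c_def sum_distrib_right by (rule sum.cong) (auto simp: mult_ac)
  also have "\<dots> > 0"
  proof (rule sum_pos2[of _ a0])
    show "a0 \<in> {..<k}" using hb1[OF a0] by simp
    show "0 < v a0 * q * (\<beta> a0)\<^sup>2" using hb1[OF a0] a0 by simp
    fix a show "0 \<le> v a * q * (\<beta> a)\<^sup>2" using hb1[of a] by (cases "\<beta> a = 0") auto
  qed simp
  finally show ?thesis .
qed

lemma npos: "n > 0"
proof -
  have "q \<noteq> 0" using cq by auto
  then show ?thesis unfolding Qf_def by (cases n) auto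
qed

lemma hessian_neg: "hessian_quad k d (quad_loss n d k v x y) W (\<lambda>a b. \<beta> a * z b) < 0"
proof -
  have t1: "(\<Sum>a<k. \<Sum>b<d. \<beta> a * z b * (v a * sfun d x W i a * x i b)) = 0" for i
  proof -
    have "(\<Sum>a<k. \<Sum>b<d. \<beta> a * z b * (v a * sfun d x W i a * x i b)) = (\<Sum>a<k. \<beta> a * v a * sfun d x W i a) * zx d x z i"
      unfolding zx_def by (simp add: sum_distrib_left sum_distrib_right algebra_simps)
    then show ?thesis using key by simp
  qed
  have t2: "(\<Sum>a<k. v a * (\<Sum>i<n. resid d k v x y W i * (\<Sum>b<d. \<beta> a * z b * x i b)\<^sup>2)) = c * q"
  proof -
    have "(\<Sum>b<d. \<beta> a * z b * x i b) = \<beta> a * zx d x z i" for a i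
      unfolding zx_def by (simp add: sum_distrib_left algebra_simps)
    then show ?thesis unfolding c_def Qf_def
      apply (simp add: sum_distrib_left sum_distrib_right power_mult_distrib algebra_simps)
      apply (rule sum.swap)
      done
  qed
  show ?thesis unfolding hessian_quad_formula t1 t2 using cq npos by simp
qed

lemma descent:
  assumes e: "e > 0"
  shows "\<exists>W'. (\<Sum>l<k. \<Sum>j<d. (W' l j - W l j)\<^sup>2) < e\<^sup>2 \<and> quad_loss n d k v x y W' < quad_loss n d k v x y W"
proof -
  define S where "S = (\<Sum>i<n. ((zx d x z i)\<^sup>2)\<^sup>2)"
  define N where "N = (\<Sum>l<k. \<Sum>j<d. (\<beta> l * z j)\<^sup>2)"
  define K where "K = c\<^sup>2 * S / 2"
  have S0: "S \<ge> 0" unfolding S_def by (simp add: sum_nonneg)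
  have N0: "N \<ge> 0" unfolding N_def by (simp add: sum_nonneg)
  have K0: "K \<ge> 0" unfolding K_def using S0 by simp
  define m where "m = min (c * q / (K + 1)) (e\<^sup>2 / (N + 1))"
  have m0: "m > 0" unfolding m_def using cq e K0 N0 by simp
  define t where "t = sqrt (m / 2)"
  have t2: "t\<^sup>2 = m / 2" unfolding t_def using m0 by simp
  define W' where "W' l j = W l j + t * (\<beta> l * z j)" for l j
  have sW': "sfun d x W' i l = sfun d x W i l + t * \<beta> l * zx d x z i" for i l
    unfolding sfun_def W'_def zx_def by (simp add: sum.distrib sum_distrib_left algebra_simps)
  have rW': "resid d k v x y W' i = resid d k v x y W i - t\<^sup>2 * c * (zx d x z i)\<^sup>2" for i
  proof -
    have "(\<Sum>l<k. v l * (sfun d x W' i l)\<^sup>2) = (\<Sum>l<k. v l * (sfun d x W i l)\<^sup>2)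
         + 2 * t * zx d x z i * (\<Sum>l<k. \<beta> l * v l * sfun d x W i l) + t\<^sup>2 * (zx d x z i)\<^sup>2 * c"
      unfolding sW' c_def by (simp add: power2_eq_square sum.distrib sum_distrib_left algebra_simps)
    then show ?thesis unfolding resid_def using key[of i] by simp
  qed
  have dist: "(\<Sum>l<k. \<Sum>j<d. (W' l j - W l j)\<^sup>2) = t\<^sup>2 * N"
    unfolding W'_def N_def by (simp add: sum_distrib_left power_mult_distrib)
  have "t\<^sup>2 * N < e\<^sup>2"
  proof -
    have "t\<^sup>2 * N \<le> t\<^sup>2 * (N + 1)" by (simp add: distrib_left)
    also have "\<dots> < m * (N + 1)" using t2 m0 N0 by simp
    also have "\<dots> \<le> e\<^sup>2 / (N + 1) * (N + 1)" using N0 unfolding m_def by (intro mult_right_mono) auto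
    also have "\<dots> = e\<^sup>2" using N0 by simp
    finally show ?thesis .
  qed
  moreover have "quad_loss n d k v x y W' < quad_loss n d k v x y W"
  proof -
    have "(\<Sum>i<n. (resid d k v x y W' i)\<^sup>2) = (\<Sum>i<n. (resid d k v x y W i)\<^sup>2) - 2 * t\<^sup>2 * (c * q) + t\<^sup>2 * t\<^sup>2 * (2 * K)"
      unfolding rW' Qf_def K_def S_def
      by (simp add: power2_eq_square sum.distrib sum_subtractf sum_distrib_left algebra_simps)
    moreover have "t\<^sup>2 * K < c * q"
    proof -
      have "t\<^sup>2 * K \<le> t\<^sup>2 * (K + 1)" by (simp add: distrib_left)
      also have "\<dots> < m * (K + 1)" using t2 m0 K0 by simp
      also have "\<dots> \<le> c * q / (K + 1) * (K + 1)" using K0 unfolding m_def by (intro mult_right_mono) auto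
      also have "\<dots> = c * q" using K0 by simp
      finally show ?thesis .
    qed
    moreover have "t\<^sup>2 > 0" using t2 m0 by (metis half_gt_zero)
    ultimately have "(\<Sum>i<n. (resid d k v x y W' i)\<^sup>2) < (\<Sum>i<n. (resid d k v x y W i)\<^sup>2)"
    proof -
      assume a1: "(\<Sum>i<n. (resid d k v x y W' i)\<^sup>2) = (\<Sum>i<n. (resid d k v x y W i)\<^sup>2) - 2 * t\<^sup>2 * (c * q) + t\<^sup>2 * t\<^sup>2 * (2 * K)"
        and a2: "t\<^sup>2 * K < c * q" and a3: "t\<^sup>2 > 0"
      have "t\<^sup>2 * (t\<^sup>2 * K) < t\<^sup>2 * (c * q)" using a2 a3 by (rule mult_strict_left_mono)
      then show ?thesis using a1 by (simp add: algebra_simps)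
    qed
    then show ?thesis unfolding quad_loss_alt using npos by (simp add: divide_strict_right_mono)
  qed
  ultimately show ?thesis using dist by (intro exI[of _ W']) simp
qed

end


lemma global_imp_local: "is_global_min f W \<Longrightarrow> is_local_min k d f W"
  unfolding is_global_min_def is_local_min_def by (intro exI[of _ 1]) auto

lemma part1:
  assumes cp: "card {l. l < k \<and> v l > 0} \<ge> d" and cn: "card {l. l < k \<and> v l < 0} \<ge> d"
  shows "(\<forall>W. is_local_min k d (quad_loss n d k v x y) W \<longrightarrow> is_global_min (quad_loss n d k v x y) W)
      \<and> (\<forall>Ws. is_saddle k d (quad_loss n d k v x y) Ws \<longrightarrow>
                    (\<exists>U. hessian_quad k d (quad_loss n d k v x y) Ws U < 0))"
proof (intro conjI allI impI)
  fix W assume lm: "is_local_min k d (quad_loss n d k v x y) W"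
  show "is_global_min (quad_loss n d k v x y) W"
  proof (rule ccontr)
    assume ng: "\<not> is_global_min (quad_loss n d k v x y) W"
    then obtain z where z: "Qf n d k v x y W z \<noteq> 0" using global_min_of_Q0 by blast
    have crit: "\<forall>a<k. \<forall>b<d. Pd n d k v x y a b W = 0" using local_min_crit[OF lm] by blast
    obtain \<beta> where b: "\<forall>a. \<beta> a \<noteq> 0 \<longrightarrow> a < k \<and> v a * Qf n d k v x y W z > 0" "\<exists>a. \<beta> a \<noteq> 0"
      "\<forall>j<d. (\<Sum>a<k. \<beta> a * v a * W a j) = 0"
      using construct_beta[OF crit cp cn z] by blast
    interpret descent_setup n d k v x y W z \<beta> by standard (use b in auto)
    obtain e where e: "e > 0" "\<And>W'. (\<Sum>l<k. \<Sum>j<d. (W' l j - W l j)\<^sup>2) < e\<^sup>2 \<Longrightarrow>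
      quad_loss n d k v x y W \<le> quad_loss n d k v x y W'"
      using lm unfolding is_local_min_def by blast
    from descent[OF e(1)] e(2) show False by force
  qed
next
  fix W assume sd: "is_saddle k d (quad_loss n d k v x y) W"
  then have "\<not> is_global_min (quad_loss n d k v x y) W"
    unfolding is_saddle_def using global_imp_local by blast
  then obtain z where z: "Qf n d k v x y W z \<noteq> 0" using global_min_of_Q0 by blast
  have crit: "\<forall>a<k. \<forall>b<d. Pd n d k v x y a b W = 0"
    using sd unfolding is_saddle_def is_critical_def by (simp add: partial_loss)
  obtain \<beta> where b: "\<forall>a. \<beta> a \<noteq> 0 \<longrightarrow> a < k \<and> v a * Qf n d k v x y W z > 0" "\<exists>a. \<beta> a \<noteq> 0"
    "\<forall>j<d. (\<Sum>a<k. \<beta> a * v a * W a j) = 0"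
    using construct_beta[OF crit cp cn z] by blast
  interpret descent_setup n d k v x y W z \<beta> by standard (use b in auto)
  show "\<exists>U. hessian_quad k d (quad_loss n d k v x y) W U < 0" using hessian_neg by blast
qed


abbreviation LB :: "(nat \<times> nat) set \<Rightarrow> ((nat \<times> nat) \<Rightarrow> real) measure" where
  "LB I \<equiv> PiM I (\<lambda>_. lborel)"

interpretation LBP: product_sigma_finite "\<lambda>_::nat\<times>nat. lborel :: real measure"
  unfolding product_sigma_finite_def by (simp add: sigma_finite_lborel)

lemma block_null:
  fixes I J :: "(nat \<times> nat) set"
  assumes IJ: "I \<inter> J = {}" "finite I" "finite J" and B: "B \<in> sets (LB (I \<union> J))"
    and ae: "AE X in LB I. {x \<in> space (LB J). merge I J (X, x) \<in> B} \<in> null_sets (LB J)"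
  shows "B \<in> null_sets (LB (I \<union> J))"
proof -
  have "emeasure (LB (I \<union> J)) B = (\<integral>\<^sup>+ Y. indicator B Y \<partial>LB (I \<union> J))"
    using B by simp
  also have "\<dots> = (\<integral>\<^sup>+ X. (\<integral>\<^sup>+ x. indicator B (merge I J (X, x)) \<partial>LB J) \<partial>LB I)"
    by (rule LBP.product_nn_integral_fold[OF IJ]) (use B in simp)
  also have "\<dots> = (\<integral>\<^sup>+ X. 0 \<partial>LB I)"
  proof (rule nn_integral_cong_AE)
    show "AE X in LB I. (\<integral>\<^sup>+ x. indicator B (merge I J (X, x)) \<partial>LB J) = 0"
      using ae
    proof eventually_elim
      case (elim X)
      let ?S = "{x \<in> space (LB J). merge I J (X, x) \<in> B}"
      have "(\<integral>\<^sup>+ x. indicator B (merge I J (X, x)) \<partial>LB J) = (\<integral>\<^sup>+ x. indicator ?S x \<partial>LB J)"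
        by (rule nn_integral_cong) (auto simp: indicator_def)
      also have "\<dots> = emeasure (LB J) ?S" using elim by (simp add: null_sets_def)
      also have "\<dots> = 0" using elim by (rule null_setsD1)
      finally show ?case .
    qed
  qed
  also have "\<dots> = 0" by simp
  finally show ?thesis using B by auto
qed

lemma coord_null:
  fixes I :: "(nat \<times> nat) set"
  assumes I: "finite I" "j \<notin> I" and B: "B \<in> sets (LB (insert j I))"
    and ae: "AE X in LB I. \<exists>c. \<forall>t. X(j := t) \<in> B \<longrightarrow> t = c"
  shows "B \<in> null_sets (LB (insert j I))"
proof -
  have "emeasure (LB (insert j I)) B = (\<integral>\<^sup>+ Y. indicator B Y \<partial>LB (insert j I))"
    using B by simp
  also have "\<dots> = (\<integral>\<^sup>+ X. (\<integral>\<^sup>+ t. indicator B (X(j := t)) \<partial>lborel) \<partial>LB I)"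
    by (rule LBP.product_nn_integral_insert[OF I]) (use B in simp)
  also have "\<dots> = (\<integral>\<^sup>+ X. 0 \<partial>LB I)"
  proof (rule nn_integral_cong_AE)
    show "AE X in LB I. (\<integral>\<^sup>+ t. indicator B (X(j := t)) \<partial>lborel) = 0"
      using ae
    proof eventually_elim
      case (elim X)
      then obtain c where c: "\<And>t. X(j := t) \<in> B \<Longrightarrow> t = c" by blast
      have "(\<integral>\<^sup>+ t. indicator B (X(j := t)) \<partial>lborel) = (\<integral>\<^sup>+ (t::real). 0 \<partial>lborel)"
      proof (rule nn_integral_cong_AE)
        show "AE t in lborel. indicator B (X(j := t)) = (0::ennreal)"
          using AE_lborel_singleton[of c]
          by eventually_elim (use c in \<open>auto simp: indicator_def\<close>)
      qed
      then show ?case by simp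
    qed
  qed
  also have "\<dots> = 0" by simp
  finally show ?thesis using B by auto
qed


lemma comp_meas: "i \<in> I \<Longrightarrow> (\<lambda>x. x i) \<in> borel_measurable (LB I)"
  using measurable_component_singleton[of i I "\<lambda>_. lborel"] by simp

lemma zero_set_meas: "f \<in> borel_measurable M \<Longrightarrow> {x \<in> space M. f x = (0::real)} \<in> sets M"
proof -
  assume f: "f \<in> borel_measurable M"
  have "f -` {0} \<inter> space M \<in> sets M" by (rule measurable_sets[OF f]) simp
  moreover have "f -` {0} \<inter> space M = {x \<in> space M. f x = 0}" by auto
  ultimately show ?thesis by simp
qed

lemma sum_split_pred:
  "(\<Sum>t\<in>A. f t) = (\<Sum>t\<in>A. if P t then f t else 0) + (\<Sum>t\<in>A. if P t then 0 else (f t::real))"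
  by (simp add: sum.distrib[symmetric] if_distrib cong: if_cong)

lemma slice_null:
  fixes C :: "nat \<Rightarrow> real" and a b :: "nat \<Rightarrow> nat"
  assumes inj: "\<And>t t'. t < Suc m \<Longrightarrow> t' < Suc m \<Longrightarrow> a t = a t' \<Longrightarrow> b t = b t' \<Longrightarrow> t = t'"
    and sep: "\<And>t t'. t < Suc m \<Longrightarrow> t' < Suc m \<Longrightarrow> a t \<noteq> b t'"
    and bd: "\<And>t. t < Suc m \<Longrightarrow> a t < d \<and> b t < d"
    and Cm: "C m \<noteq> 0"
  shows "{x \<in> space (LB ({m} \<times> {..<d})). (\<Sum>t<Suc m. C t * x (m, a t) * x (m, b t)) = 0} \<in> null_sets (LB ({m} \<times> {..<d}))"
proof -
  define J where "J = {m} \<times> {..<d}"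
  define u0 where "u0 = (m, a m)"
  define w0 where "w0 = (m, b m)"
  define J1 where "J1 = J - {w0}"
  define J2 where "J2 = J1 - {u0}"
  have uw: "u0 \<noteq> w0" unfolding u0_def w0_def using sep[of m m] by simp
  have w0J: "w0 \<in> J" and u0J: "u0 \<in> J" unfolding J_def w0_def u0_def using bd[of m] by auto
  have JJ1: "J = insert w0 J1" using w0J unfolding J1_def by auto
  have J1J2: "J1 = insert u0 J2" using u0J uw unfolding J1_def J2_def by auto
  have finJ: "finite J" "finite J1" "finite J2" unfolding J_def J1_def J2_def by auto
  have aJ: "(m, a t) \<in> J" "(m, b t) \<in> J" if "t < Suc m" for t using bd[OF that] unfolding J_def by auto
  define q where "q x = (\<Sum>t<Suc m. C t * x (m, a t) * x (m, b t))" for x :: "nat \<times> nat \<Rightarrow> real"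
  define L where "L x = (\<Sum>t<Suc m. (if b t = b m then C t else 0) * x (m, a t))" for x :: "nat \<times> nat \<Rightarrow> real"
  define R where "R x = (\<Sum>t<Suc m. if b t = b m then 0 else C t * x (m, a t) * x (m, b t))" for x :: "nat \<times> nat \<Rightarrow> real"
  define L2 where "L2 x = (\<Sum>t<Suc m. if b t = b m \<and> t \<noteq> m then C t * x (m, a t) else 0)" for x :: "nat \<times> nat \<Rightarrow> real"
  have qsplit: "q (x(w0 := s)) = L x * s + R x" for x s
  proof -
    have "q (x(w0 := s)) = (\<Sum>t<Suc m. if b t = b m then C t * x (m, a t) * s else 0) + R x"
      unfolding q_def R_def
      by (subst sum_split_pred[where P="\<lambda>t. b t = b m"])
         (intro arg_cong2[where f="(+)"] sum.cong refl; use sep in \<open>auto simp: w0_def\<close>)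
    also have "(\<Sum>t<Suc m. if b t = b m then C t * x (m, a t) * s else 0) = L x * s"
      unfolding L_def sum_distrib_right by (rule sum.cong) auto
    finally show ?thesis .
  qed
  have Lsplit: "L (x(u0 := s)) = C m * s + L2 x" for x s
  proof -
    have "L (x(u0 := s)) = (\<Sum>t<Suc m. (if t = m then C m * s else 0) + (if b t = b m \<and> t \<noteq> m then C t * x (m, a t) else 0))"
      unfolding L_def
    proof (rule sum.cong[OF refl])
      fix t assume t: "t \<in> {..<Suc m}"
      show "(if b t = b m then C t else 0) * (x(u0 := s)) (m, a t) =
        (if t = m then C m * s else 0) + (if b t = b m \<and> t \<noteq> m then C t * x (m, a t) else 0)"
        using inj[of t m] t by (auto simp: u0_def)
    qed
    also have "\<dots> = C m * s + L2 x" unfolding L2_def by (simp add: sum.distrib)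
    finally show ?thesis .
  qed
  have measJ: "\<And>I. (\<And>t. t < Suc m \<Longrightarrow> (m, a t) \<in> I \<and> (m, b t) \<in> I) \<Longrightarrow> q \<in> borel_measurable (LB I)"
    unfolding q_def by (intro borel_measurable_sum borel_measurable_times comp_meas borel_measurable_const) auto
  have measL: "L \<in> borel_measurable (LB J1)"
  proof -
    have "(m, a t) \<in> J1" if "t < Suc m" for t using aJ[OF that] sep[OF that, of m] unfolding J1_def w0_def by auto
    then show ?thesis unfolding L_def by (intro borel_measurable_sum borel_measurable_times comp_meas borel_measurable_const) auto
  qed
  have N: "{x \<in> space (LB J1). L x = 0} \<in> null_sets (LB J1)"
    unfolding J1J2
  proof (rule coord_null)
    show "finite J2" "u0 \<notin> J2" using finJ unfolding J2_def by auto
    show "{x \<in> space (LB (insert u0 J2)). L x = 0} \<in> sets (LB (insert u0 J2))"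
      using zero_set_meas[OF measL] J1J2 by simp
    show "AE X in LB J2. \<exists>c. \<forall>t. X(u0 := t) \<in> {x \<in> space (LB (insert u0 J2)). L x = 0} \<longrightarrow> t = c"
    proof (rule AE_I2)
      fix X show "\<exists>c. \<forall>t. X(u0 := t) \<in> {x \<in> space (LB (insert u0 J2)). L x = 0} \<longrightarrow> t = c"
        by (intro exI[of _ "- L2 X / C m"]) (use Cm in \<open>auto simp: Lsplit field_simps\<close>)
    qed
  qed
  have "{x \<in> space (LB J). q x = 0} \<in> null_sets (LB J)"
    unfolding JJ1
  proof (rule coord_null)
    show "finite J1" "w0 \<notin> J1" using finJ unfolding J1_def by auto
    show "{x \<in> space (LB (insert w0 J1)). q x = 0} \<in> sets (LB (insert w0 J1))"
      using zero_set_meas[OF measJ[of J]] aJ JJ1 by simp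
    show "AE X in LB J1. \<exists>c. \<forall>t. X(w0 := t) \<in> {x \<in> space (LB (insert w0 J1)). q x = 0} \<longrightarrow> t = c"
    proof (rule AE_I'[OF N])
      show "{x \<in> space (LB J1). \<not> (\<exists>c. \<forall>t. x(w0 := t) \<in> {x \<in> space (LB (insert w0 J1)). q x = 0} \<longrightarrow> t = c)}
            \<subseteq> {x \<in> space (LB J1). L x = 0}"
      proof (safe, rule ccontr)
        fix x assume x: "x \<in> space (LB J1)" and nc: "\<not> (\<exists>c. \<forall>t. x(w0 := t) \<in> {x \<in> space (LB (insert w0 J1)). q x = 0} \<longrightarrow> t = c)"
          and L0: "L x \<noteq> 0"
        have "\<forall>t. x(w0 := t) \<in> {x \<in> space (LB (insert w0 J1)). q x = 0} \<longrightarrow> t = - R x / L x"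
          using L0 by (auto simp: qsplit field_simps)
        with nc show False by blast
      qed
    qed
  qed
  then show ?thesis unfolding J_def q_def .
qed


definition Mm :: "nat \<Rightarrow> nat \<Rightarrow> nat \<Rightarrow> (nat \<times> nat \<Rightarrow> real) \<Rightarrow> real mat" where
  "Mm h p m X = mat m m (\<lambda>(i, t). X (i, t div p) * X (i, h + t mod p))"

lemma Mm_carrier: "Mm h p m X \<in> carrier_mat m m" unfolding Mm_def by simp

lemma det0: "det (Mm h p 0 X) = 1"
  unfolding Mm_def det_def by simp


lemma idx_bounds:
  fixes p t h :: nat
  assumes "p > 0" "t < h * p"
  shows "t div p < h" "h + t mod p < h + p"
proof -
  show "t div p < h" using assms by (metis less_mult_imp_div_less)
  show "h + t mod p < h + p" using assms by simp
qed

lemma D_meas: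
  assumes p: "p > 0" and m: "m \<le> h * p"
  shows "(\<lambda>X. det (Mm h p m X)) \<in> borel_measurable (LB ({..<m} \<times> {..<h + p}))"
proof -
  have eq: "det (Mm h p m X) = (\<Sum>\<pi>\<in>{\<pi>. \<pi> permutes {0..<m}}. signof \<pi> * (\<Prod>i = 0..<m. X (i, \<pi> i div p) * X (i, h + \<pi> i mod p)))" for X
    unfolding det_def'[OF Mm_carrier]
  proof (rule sum.cong[OF refl], rule arg_cong[where f="\<lambda>u. _ * u"], rule prod.cong[OF refl])
    fix \<pi> i assume \<pi>: "\<pi> \<in> {\<pi>. \<pi> permutes {0..<m}}" and i: "i \<in> {0..<m}"
    have "\<pi> i < m" using permutes_in_image[of \<pi> "{0..<m}" i] \<pi> i by auto
    then show "Mm h p m X $$ (i, \<pi> i) = X (i, \<pi> i div p) * X (i, h + \<pi> i mod p)"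
      unfolding Mm_def using i by simp
  qed
  have mem: "(i, \<pi> i div p) \<in> {..<m} \<times> {..<h + p}" "(i, h + \<pi> i mod p) \<in> {..<m} \<times> {..<h + p}"
    if "\<pi> permutes {0..<m}" "i \<in> {0..<m}" for \<pi> i
  proof -
    have "\<pi> i < m" using permutes_in_image[of \<pi> "{0..<m}" i] that by auto
    then have "\<pi> i < h * p" using m by simp
    from idx_bounds[OF p this] that show "(i, \<pi> i div p) \<in> {..<m} \<times> {..<h + p}" "(i, h + \<pi> i mod p) \<in> {..<m} \<times> {..<h + p}"
      by auto
  qed
  show ?thesis unfolding eq
    by (intro borel_measurable_sum borel_measurable_times borel_measurable_prod borel_measurable_const comp_meas mem) auto
qed


definition Cof :: "nat \<Rightarrow> nat \<Rightarrow> nat \<Rightarrow> nat \<Rightarrow> (nat \<times> nat \<Rightarrow> real) \<Rightarrow> real" where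
  "Cof h p m t Y = (-1)^(m+t) * det (mat m m (\<lambda>(i', j'). Y (i', (if j' < t then j' else Suc j') div p)
        * Y (i', h + (if j' < t then j' else Suc j') mod p)))"

lemma D_expand:
  "det (Mm h p (Suc m) Y) = (\<Sum>t<Suc m. Cof h p m t Y * Y (m, t div p) * Y (m, h + t mod p))"
proof -
  have "det (Mm h p (Suc m) Y) = (\<Sum>t<Suc m. Mm h p (Suc m) Y $$ (m, t) * cofactor (Mm h p (Suc m) Y) m t)"
    by (rule laplace_expansion_row[OF Mm_carrier]) simp
  also have "\<dots> = (\<Sum>t<Suc m. Cof h p m t Y * Y (m, t div p) * Y (m, h + t mod p))"
  proof (rule sum.cong[OF refl])
    fix t assume t: "t \<in> {..<Suc m}"
    have "mat_delete (Mm h p (Suc m) Y) m t = mat m m (\<lambda>(i', j'). Y (i', (if j' < t then j' else Suc j') div p)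
        * Y (i', h + (if j' < t then j' else Suc j') mod p))"
      unfolding mat_delete_def Mm_def by (rule eq_matI) auto
    then show "Mm h p (Suc m) Y $$ (m, t) * cofactor (Mm h p (Suc m) Y) m t = Cof h p m t Y * Y (m, t div p) * Y (m, h + t mod p)"
      unfolding cofactor_def Cof_def using t by (simp add: Mm_def)
  qed
  finally show ?thesis .
qed

lemma Cof_m: "Cof h p m m Y = det (Mm h p m Y)"
proof -
  have "mat m m (\<lambda>(i', j'). Y (i', (if j' < m then j' else Suc j') div p) * Y (i', h + (if j' < m then j' else Suc j') mod p))
     = Mm h p m Y"
    unfolding Mm_def by (rule eq_matI) auto
  then show ?thesis unfolding Cof_def by (simp add: mult_2[symmetric])
qed


lemma Cof_cong: "(\<And>i j. i < m \<Longrightarrow> Y (i, j) = Y' (i, j)) \<Longrightarrow> Cof h p m t Y = Cof h p m t Y'"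
proof -
  assume a: "\<And>i j. i < m \<Longrightarrow> Y (i, j) = Y' (i, j)"
  have "mat m m (\<lambda>(i', j'). Y (i', (if j' < t then j' else Suc j') div p) * Y (i', h + (if j' < t then j' else Suc j') mod p))
     = mat m m (\<lambda>(i', j'). Y' (i', (if j' < t then j' else Suc j') div p) * Y' (i', h + (if j' < t then j' else Suc j') mod p))"
    by (rule eq_matI) (auto simp: a)
  then show ?thesis unfolding Cof_def by simp
qed

lemma D_null:
  assumes p: "p > 0" and m: "m \<le> h * p"
  shows "{X \<in> space (LB ({..<m} \<times> {..<h + p})). det (Mm h p m X) = 0} \<in> null_sets (LB ({..<m} \<times> {..<h + p}))"
  using m
proof (induction m)
  case 0
  then show ?case by (simp add: det0)
next
  case (Suc m)
  define d where "d = h + p"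
  define I where "I = {..<m} \<times> {..<d}"
  define J where "J = {m} \<times> {..<d}"
  have IJ: "I \<inter> J = {}" "finite I" "finite J" unfolding I_def J_def by auto
  have IJu: "{..<Suc m} \<times> {..<d} = I \<union> J" unfolding I_def J_def by auto
  have IH: "{X \<in> space (LB I). det (Mm h p m X) = 0} \<in> null_sets (LB I)"
    using Suc unfolding I_def d_def by simp
  have meas: "{Y \<in> space (LB (I \<union> J)). det (Mm h p (Suc m) Y) = 0} \<in> sets (LB (I \<union> J))"
    using zero_set_meas[OF D_meas[OF p Suc.prems]] IJu unfolding d_def by simp
  have "{Y \<in> space (LB (I \<union> J)). det (Mm h p (Suc m) Y) = 0} \<in> null_sets (LB (I \<union> J))"
  proof (rule block_null[OF IJ meas])
    show "AE X in LB I. {x \<in> space (LB J). merge I J (X, x) \<in> {Y \<in> space (LB (I \<union> J)). det (Mm h p (Suc m) Y) = 0}} \<in> null_sets (LB J)"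
    proof (rule AE_I'[OF IH], safe)
      fix X assume X: "X \<in> space (LB I)"
        and nn: "{x \<in> space (LB J). merge I J (X, x) \<in> {Y \<in> space (LB (I \<union> J)). det (Mm h p (Suc m) Y) = 0}} \<notin> null_sets (LB J)"
      show "det (Mm h p m X) = 0"
      proof (rule ccontr)
        assume D0: "det (Mm h p m X) \<noteq> 0"
        define C where "C t = Cof h p m t X" for t
        have slice: "{x \<in> space (LB J). merge I J (X, x) \<in> {Y \<in> space (LB (I \<union> J)). det (Mm h p (Suc m) Y) = 0}}
           = {x \<in> space (LB ({m} \<times> {..<d})). (\<Sum>t<Suc m. C t * x (m, t div p) * x (m, h + t mod p)) = 0}"
        proof (rule Collect_cong, rule conj_cong)
          fix x
          show "x \<in> space (LB J) \<longleftrightarrow> x \<in> space (LB ({m} \<times> {..<d}))" unfolding J_def ..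
          assume x': "x \<in> space (LB ({m} \<times> {..<d}))"
          then have x: "x \<in> space (LB J)" unfolding J_def .
          have mem: "merge I J (X, x) \<in> space (LB (I \<union> J))"
            using X x unfolding space_PiM PiE_def extensional_def by (simp add: merge_def)
          have e1: "merge I J (X, x) (i, j) = X (i, j)" if "i < m" for i j
          proof (cases "j < d")
            case True then show ?thesis using that by (simp add: merge_def I_def)
          next
            case False
            then have "(i, j) \<notin> I \<union> J" unfolding I_def J_def by auto
            moreover have "(i, j) \<notin> I" using False unfolding I_def by auto
            ultimately show ?thesis using X
              by (simp add: merge_def space_PiM PiE_def extensional_def)
          qed
          have e2: "merge I J (X, x) (m, j) = x (m, j)" if "j < d" for j
            using that by (simp add: merge_def I_def J_def)
          have bds: "t div p < d" "h + t mod p < d" if "t < Suc m" for t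
            using idx_bounds[OF p, of t h] that Suc.prems unfolding d_def by auto
          have "det (Mm h p (Suc m) (merge I J (X, x))) = (\<Sum>t<Suc m. C t * x (m, t div p) * x (m, h + t mod p))"
          proof -
            have cc: "Cof h p m t (merge I J (X, x)) = C t" for t
              unfolding C_def by (rule Cof_cong) (simp add: e1)
            show ?thesis unfolding D_expand
              by (rule sum.cong[OF refl]) (simp add: cc e2 bds)
          qed
          then show "merge I J (X, x) \<in> {Y \<in> space (LB (I \<union> J)). det (Mm h p (Suc m) Y) = 0} \<longleftrightarrow>
                 (\<Sum>t<Suc m. C t * x (m, t div p) * x (m, h + t mod p)) = 0"
            using mem by simp
        qed
        have "{x \<in> space (LB ({m} \<times> {..<d})). (\<Sum>t<Suc m. C t * x (m, t div p) * x (m, h + t mod p)) = 0} \<in> null_sets (LB ({m} \<times> {..<d}))"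
        proof (rule slice_null)
          fix t t' assume t: "t < Suc m" "t' < Suc m"
          show "t div p \<noteq> h + t' mod p" using idx_bounds(1)[OF p, of t h] t Suc.prems by simp
          show "t div p < d \<and> h + t mod p < d" using idx_bounds[OF p, of t h] t Suc.prems unfolding d_def by simp
          assume "t div p = t' div p" "h + t mod p = h + t' mod p"
          then show "t = t'" by (metis add_left_cancel div_mult_mod_eq)
        next
          show "C m \<noteq> 0" using D0 by (simp add: C_def Cof_m)
        qed
        with nn slice show False by (simp add: J_def)
      qed
    qed
  qed
  then show ?case using IJu unfolding d_def by simp
qed


lemma solve_lin:
  fixes M :: "real mat"
  assumes M: "M \<in> carrier_mat n n" and D: "det M \<noteq> 0"
  shows "\<exists>\<alpha>. \<forall>i<n. (\<Sum>t<n. M $$ (i, t) * \<alpha> t) = y i"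
proof -
  define yv where "yv = vec n y"
  define \<alpha> where "\<alpha> t = (adj_mat M *\<^sub>v yv) $ t / det M" for t
  have A: "adj_mat M \<in> carrier_mat n n" using adj_mat(1)[OF M] .
  have yv: "yv \<in> carrier_vec n" unfolding yv_def by simp
  have "\<forall>i<n. (\<Sum>t<n. M $$ (i, t) * \<alpha> t) = y i"
  proof (intro allI impI)
    fix i assume i: "i < n"
    have "(M *\<^sub>v (adj_mat M *\<^sub>v yv)) $ i = ((M * adj_mat M) *\<^sub>v yv) $ i"
      using M A yv by simp
    also have "\<dots> = ((det M \<cdot>\<^sub>m 1\<^sub>m n) *\<^sub>v yv) $ i" using adj_mat(2)[OF M] by simp
    also have "\<dots> = det M * y i"
      using i yv unfolding yv_def
      apply (simp add: scalar_prod_def row_def)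
      apply (subst sum.cong[OF refl, where h="\<lambda>ia. if i = ia then det M * y ia else 0"])
       apply auto
      done
    finally have e: "(M *\<^sub>v (adj_mat M *\<^sub>v yv)) $ i = det M * y i" .
    have "(M *\<^sub>v (adj_mat M *\<^sub>v yv)) $ i = (\<Sum>t<n. M $$ (i, t) * (adj_mat M *\<^sub>v yv) $ t)"
      using i M A yv by (simp add: scalar_prod_def row_def atLeast0LessThan)
    then have "(\<Sum>t<n. M $$ (i, t) * (adj_mat M *\<^sub>v yv) $ t) = det M * y i" using e by simp
    then show "(\<Sum>t<n. M $$ (i, t) * \<alpha> t) = y i"
      unfolding \<alpha>_def using D by (simp add: sum_divide_distrib[symmetric] times_divide_eq_right)
  qed
  then show ?thesis by blast
qed


lemma represent:
  fixes d k :: nat and v :: "nat \<Rightarrow> real" and R :: "nat \<Rightarrow> nat \<Rightarrow> real"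
  assumes cp: "card {l. l < k \<and> v l > 0} \<ge> d" and cn: "card {l. l < k \<and> v l < 0} \<ge> d"
  shows "\<exists>W. \<forall>xi :: nat \<Rightarrow> real. (\<Sum>l<k. v l * (\<Sum>j<d. W l j * xi j)\<^sup>2) = (\<Sum>u<d. xi u * (\<Sum>w<d. R u w * xi w))"
proof -
  define P where "P = {l. l < k \<and> v l > 0}"
  define N where "N = {l. l < k \<and> v l < 0}"
  have finP: "finite P" "finite N" unfolding P_def N_def by auto
  obtain fp where fp: "fp ` {..<d} \<subseteq> P" "inj_on fp {..<d}"
    using card_le_inj[of "{..<d}" P] finP cp unfolding P_def by auto
  obtain fn where fn: "fn ` {..<d} \<subseteq> N" "inj_on fn {..<d}"
    using card_le_inj[of "{..<d}" N] finP cn unfolding N_def by auto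
  define A where "A = fp ` {..<d}"
  define B where "B = fn ` {..<d}"
  have AB: "A \<inter> B = {}"
  proof -
    have "A \<subseteq> P" "B \<subseteq> N" using fp fn unfolding A_def B_def by auto
    moreover have "P \<inter> N = {}" unfolding P_def N_def by auto
    ultimately show ?thesis by blast
  qed
  define W where "W l j = (if l \<in> A then ((if j = inv_into {..<d} fp l then 1 else 0) + R (inv_into {..<d} fp l) j) / (2 * sqrt (v l))
     else if l \<in> B then ((if j = inv_into {..<d} fn l then 1 else 0) - R (inv_into {..<d} fn l) j) / (2 * sqrt (- v l))
     else 0)" for l j
  have "\<forall>xi :: nat \<Rightarrow> real. (\<Sum>l<k. v l * (\<Sum>j<d. W l j * xi j)\<^sup>2) = (\<Sum>u<d. xi u * (\<Sum>w<d. R u w * xi w))"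
  proof
    fix xi :: "nat \<Rightarrow> real"
    define \<rho> where "\<rho> u = (\<Sum>w<d. R u w * xi w)" for u
    define f where "f l = v l * (\<Sum>j<d. W l j * xi j)\<^sup>2" for l
    have fA: "f (fp u) = (xi u + \<rho> u)\<^sup>2 / 4" if u: "u < d" for u
    proof -
      have inA: "fp u \<in> A" using u unfolding A_def by auto
      have inv: "inv_into {..<d} fp (fp u) = u" using fp(2) u by (simp add: inv_into_f_f)
      have vpos: "v (fp u) > 0" using fp(1) u unfolding P_def by auto
      have "(\<Sum>j<d. W (fp u) j * xi j) = (\<Sum>j<d. ((if j = u then 1 else 0) + R u j) * xi j) / (2 * sqrt (v (fp u)))"
        unfolding W_def using inA inv by (simp add: sum_divide_distrib)
      also have "(\<Sum>j<d. ((if j = u then 1 else 0) + R u j) * xi j) = xi u + \<rho> u"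
      proof -
        have "(\<Sum>j<d. ((if j = u then 1 else 0) + R u j) * xi j) = (\<Sum>j<d. (if j = u then xi j else 0)) + (\<Sum>j<d. R u j * xi j)"
          by (subst sum.distrib[symmetric]) (rule sum.cong, auto simp: distrib_right)
        then show ?thesis unfolding \<rho>_def using u by simp
      qed
      finally show ?thesis unfolding f_def using vpos by (simp add: power_divide power_mult_distrib)
    qed
    have fB: "f (fn u) = - (xi u - \<rho> u)\<^sup>2 / 4" if u: "u < d" for u
    proof -
      have inB: "fn u \<in> B" using u unfolding B_def by auto
      then have nA: "fn u \<notin> A" using AB by auto
      have inv: "inv_into {..<d} fn (fn u) = u" using fn(2) u by (simp add: inv_into_f_f)
      have vneg: "v (fn u) < 0" using fn(1) u unfolding N_def by auto
      have "(\<Sum>j<d. W (fn u) j * xi j) = (\<Sum>j<d. ((if j = u then 1 else 0) - R u j) * xi j) / (2 * sqrt (- v (fn u)))"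
        unfolding W_def using inB nA inv by (simp add: sum_divide_distrib)
      also have "(\<Sum>j<d. ((if j = u then 1 else 0) - R u j) * xi j) = xi u - \<rho> u"
      proof -
        have "(\<Sum>j<d. ((if j = u then 1 else 0) - R u j) * xi j) = (\<Sum>j<d. (if j = u then xi j else 0)) - (\<Sum>j<d. R u j * xi j)"
          by (subst sum_subtractf[symmetric]) (rule sum.cong, auto simp: left_diff_distrib)
        then show ?thesis unfolding \<rho>_def using u by simp
      qed
      finally show ?thesis unfolding f_def using vneg by (simp add: power_divide power_mult_distrib)
    qed
    have sub: "A \<union> B \<subseteq> {..<k}" using fp fn unfolding A_def B_def P_def N_def by auto
    have "(\<Sum>l<k. f l) = (\<Sum>l\<in>A \<union> B. f l)"
      by (rule sum.mono_neutral_right) (use sub in \<open>auto simp: f_def W_def\<close>)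
    also have "\<dots> = (\<Sum>l\<in>A. f l) + (\<Sum>l\<in>B. f l)"
      by (rule sum.union_disjoint) (use AB in \<open>auto simp: A_def B_def\<close>)
    also have "(\<Sum>l\<in>A. f l) = (\<Sum>u<d. (xi u + \<rho> u)\<^sup>2 / 4)"
      unfolding A_def by (subst sum.reindex[OF fp(2)]) (simp add: fA)
    also have "(\<Sum>l\<in>B. f l) = (\<Sum>u<d. - (xi u - \<rho> u)\<^sup>2 / 4)"
      unfolding B_def by (subst sum.reindex[OF fn(2)]) (simp add: fB)
    also have "(\<Sum>u<d. (xi u + \<rho> u)\<^sup>2 / 4) + (\<Sum>u<d. - (xi u - \<rho> u)\<^sup>2 / 4) = (\<Sum>u<d. xi u * \<rho> u)"
      by (simp add: sum.distrib[symmetric] power2_eq_square field_simps)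
    finally show "(\<Sum>l<k. v l * (\<Sum>j<d. W l j * xi j)\<^sup>2) = (\<Sum>u<d. xi u * (\<Sum>w<d. R u w * xi w))"
      unfolding f_def \<rho>_def .
  qed
  then show ?thesis by blast
qed


lemma double_delta:
  fixes \<alpha> xi :: "nat \<Rightarrow> real" and a b :: "nat \<Rightarrow> nat"
  assumes bd: "\<And>t. t < n \<Longrightarrow> a t < d \<and> b t < d"
  shows "(\<Sum>u<d. xi u * (\<Sum>w<d. (\<Sum>t<n. if a t = u \<and> b t = w then \<alpha> t else 0) * xi w))
       = (\<Sum>t<n. \<alpha> t * xi (a t) * xi (b t))"
proof -
  have "(\<Sum>u<d. xi u * (\<Sum>w<d. (\<Sum>t<n. if a t = u \<and> b t = w then \<alpha> t else 0) * xi w))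
      = (\<Sum>u<d. \<Sum>w<d. \<Sum>t<n. if a t = u \<and> b t = w then \<alpha> t * xi u * xi w else 0)"
    by (simp add: sum_distrib_left sum_distrib_right if_distrib mult_ac cong: if_cong)
  also have "\<dots> = (\<Sum>t<n. \<Sum>u<d. \<Sum>w<d. if a t = u \<and> b t = w then \<alpha> t * xi u * xi w else 0)"
    by (simp only: sum.swap[where B="{..<n}"])
  also have "\<dots> = (\<Sum>t<n. \<alpha> t * xi (a t) * xi (b t))"
  proof (rule sum.cong[OF refl])
    fix t assume t: "t \<in> {..<n}"
    have "(\<Sum>u<d. \<Sum>w<d. if a t = u \<and> b t = w then \<alpha> t * xi u * xi w else 0)
        = (\<Sum>u<d. if a t = u then (\<Sum>w<d. if b t = w then \<alpha> t * xi u * xi w else 0) else 0)"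
      by (rule sum.cong) auto
    also have "\<dots> = \<alpha> t * xi (a t) * xi (b t)" using bd[of t] t by (simp add: sum.delta)
    finally show "(\<Sum>u<d. \<Sum>w<d. if a t = u \<and> b t = w then \<alpha> t * xi u * xi w else 0) = \<alpha> t * xi (a t) * xi (b t)" .
  qed
  finally show ?thesis .
qed

lemma quad_loss_nonneg: "quad_loss n d k v x y W \<ge> 0"
  unfolding quad_loss_def by (intro mult_nonneg_nonneg sum_nonneg) auto

lemma zero_global: "quad_loss n d k v x y W = 0 \<Longrightarrow> is_global_min (quad_loss n d k v x y) W"
  unfolding is_global_min_def using quad_loss_nonneg by (metis (no_types))

lemma part2_solvable:
  assumes p: "p > 0" and n: "n \<le> h * p"
    and cp: "card {l. l < k \<and> v l > 0} \<ge> h + p" and cn: "card {l. l < k \<and> v l < 0} \<ge> h + p"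
    and D: "det (Mm h p n X) \<noteq> 0"
  shows "\<exists>W. quad_loss n (h + p) k v (\<lambda>i j. X (i, j)) y W = 0"
proof -
  let ?d = "h + p"
  obtain \<alpha> where \<alpha>: "\<And>i. i < n \<Longrightarrow> (\<Sum>t<n. Mm h p n X $$ (i, t) * \<alpha> t) = y i"
    using solve_lin[OF Mm_carrier D, of y] by blast
  define R where "R u w = (\<Sum>t<n. if t div p = u \<and> h + t mod p = w then \<alpha> t else 0)" for u w
  obtain W where W: "\<And>xi. (\<Sum>l<k. v l * (\<Sum>j<?d. W l j * xi j)\<^sup>2) = (\<Sum>u<?d. xi u * (\<Sum>w<?d. R u w * xi w))"
    using represent[OF cp cn, of R] by blast
  have bd: "t div p < ?d \<and> h + t mod p < ?d" if "t < n" for t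
    using idx_bounds[OF p, of t h] that n by auto
  have res: "resid ?d k v (\<lambda>i j. X (i, j)) y W i = 0" if i: "i < n" for i
  proof -
    have "(\<Sum>l<k. v l * (sfun ?d (\<lambda>i j. X (i, j)) W i l)\<^sup>2) = (\<Sum>t<n. \<alpha> t * X (i, t div p) * X (i, h + t mod p))"
      unfolding sfun_def W R_def by (rule double_delta[OF bd])
    also have "\<dots> = y i" using \<alpha>[OF i] unfolding Mm_def using i
      by (simp add: mult_ac)
    finally show ?thesis unfolding resid_def by simp
  qed
  have "quad_loss n ?d k v (\<lambda>i j. X (i, j)) y W = 0"
    unfolding quad_loss_alt using res by simp
  then show ?thesis by blast
qed


lemma hp_bound:
  fixes n d :: nat
  assumes "d \<le> n" "0 < n" "8 * n \<le> d * d"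
  shows "n \<le> (d div 2) * (d - d div 2)" "d - d div 2 > 0"
proof -
  have d8: "d \<ge> 8"
  proof (rule ccontr)
    assume "\<not> d \<ge> 8"
    have "d > 0" using assms by (cases d) auto
    then have "d * d < 8 * d" using \<open>\<not> d \<ge> 8\<close> by (intro mult_strict_right_mono) auto
    then show False using assms by linarith
  qed
  show "d - d div 2 > 0" using d8 by simp
  obtain h r where hr: "d = 2 * h + r" "r < 2" "h = d div 2" by (metis div_mult_mod_eq mod_less_divisor mult.commute zero_less_numeral)
  have h1: "h \<ge> 1" using d8 hr by linarith
  show "n \<le> (d div 2) * (d - d div 2)"
  proof (cases "r = 0")
    case True
    then have dh: "d - h = h" using hr by presburger
    have "d * d = 4 * (h * h)" using hr(1) True by (simp add: algebra_simps)
    then have "8 * n \<le> 4 * (h * h)" using assms(3) by simp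
    then have "n \<le> h * h" by linarith
    then show ?thesis by (simp only: hr(3)[symmetric] dh)
  next
    case False
    then have r1: "r = 1" using hr by simp
    then have dh: "d - h = h + 1" using hr by presburger
    have "d * d = 4 * (h * h) + 4 * h + 1" using hr(1) r1 by (simp add: algebra_simps)
    then have "8 * n \<le> 4 * (h * h) + 4 * h + 1" using assms(3) by simp
    moreover have "h * (h + 1) = h * h + h" by (simp add: algebra_simps)
    ultimately have "n \<le> h * (h + 1)" using h1 by linarith
    then show ?thesis by (simp only: hr(3)[symmetric] dh)
  qed
qed

lemma part2:
  "\<exists>c::real. c > 0 \<and>
            (\<forall>(n::nat) (d::nat) (k::nat) (v::nat \<Rightarrow> real).
               k \<ge> 2 * d \<and> card {l. l < k \<and> v l > 0} \<ge> d \<and> card {l. l < k \<and> v l < 0} \<ge> d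
               \<and> d \<le> n \<and> real n \<le> c * (real d)\<^sup>2 \<longrightarrow>
               (AE X in PiM ({..<n} \<times> {..<d}) (\<lambda>_. lborel).
                  \<forall>y::nat \<Rightarrow> real.
                    (\<exists>W. is_global_min (quad_loss n d k v (\<lambda>i j. X (i, j)) y) W
                         \<and> quad_loss n d k v (\<lambda>i j. X (i, j)) y W = 0)))"
proof (intro exI[of _ "1/8"] conjI allI impI)
  fix n d k :: nat and v :: "nat \<Rightarrow> real"
  assume as: "k \<ge> 2 * d \<and> card {l. l < k \<and> v l > 0} \<ge> d \<and> card {l. l < k \<and> v l < 0} \<ge> d
               \<and> d \<le> n \<and> real n \<le> 1/8 * (real d)\<^sup>2"
  show "AE X in PiM ({..<n} \<times> {..<d}) (\<lambda>_. lborel).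
                  \<forall>y::nat \<Rightarrow> real.
                    (\<exists>W. is_global_min (quad_loss n d k v (\<lambda>i j. X (i, j)) y) W
                         \<and> quad_loss n d k v (\<lambda>i j. X (i, j)) y W = 0)"
  proof (cases "n = 0")
    case True
    show ?thesis
      by (rule AE_I2) (use True in \<open>auto intro!: exI[of _ "\<lambda>_ _. 0"] zero_global simp: quad_loss_def\<close>)
  next
    case False
    define h where "h = d div 2"
    define p where "p = d - d div 2"
    have "real (8 * n) \<le> real (d * d)" using as by (simp add: power2_eq_square)
    then have 8: "8 * n \<le> d * d" by linarith
    from hp_bound[OF _ _ 8] as False have n: "n \<le> h * p" and p: "p > 0" unfolding h_def p_def by auto
    have d: "d = h + p" unfolding h_def p_def by simp
    have cp: "card {l. l < k \<and> v l > 0} \<ge> h + p" and cn: "card {l. l < k \<and> v l < 0} \<ge> h + p"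
      using as d by auto
    have N: "{X \<in> space (LB ({..<n} \<times> {..<d})). det (Mm h p n X) = 0} \<in> null_sets (LB ({..<n} \<times> {..<d}))"
      using D_null[OF p n] d by simp
    show ?thesis
    proof (rule AE_I'[OF N])
      show "{X \<in> space (PiM ({..<n} \<times> {..<d}) (\<lambda>_. lborel)). \<not> (\<forall>y::nat \<Rightarrow> real.
                    (\<exists>W. is_global_min (quad_loss n d k v (\<lambda>i j. X (i, j)) y) W
                         \<and> quad_loss n d k v (\<lambda>i j. X (i, j)) y W = 0))}
         \<subseteq> {X \<in> space (LB ({..<n} \<times> {..<d})). det (Mm h p n X) = 0}"
      proof (safe)
        fix X y assume X: "X \<in> space (PiM ({..<n} \<times> {..<d}) (\<lambda>_. lborel))"
          and nW: "\<nexists>W. is_global_min (quad_loss n d k v (\<lambda>i j. X (i, j)) y) W \<and> quad_loss n d k v (\<lambda>i j. X (i, j)) y W = 0"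
        show "det (Mm h p n X) = 0"
        proof (rule ccontr)
          assume "det (Mm h p n X) \<noteq> 0"
          from part2_solvable[OF p n cp cn this, of y] obtain W where
            "quad_loss n (h + p) k v (\<lambda>i j. X (i, j)) y W = 0" by blast
          then have "quad_loss n d k v (\<lambda>i j. X (i, j)) y W = 0" using d by simp
          with nW zero_global show False by blast
        qed
      qed
    qed
  qed
qed simp


theorem theorem2p1:
  shows "(\<forall>(n::nat) (d::nat) (k::nat) (v::nat \<Rightarrow> real) (x::nat \<Rightarrow> nat \<Rightarrow> real) (y::nat \<Rightarrow> real).
            k \<ge> 2 * d \<and> card {l. l < k \<and> v l > 0} \<ge> d \<and> card {l. l < k \<and> v l < 0} \<ge> d \<longrightarrow>
              (\<forall>W. is_local_min k d (quad_loss n d k v x y) W \<longrightarrow> is_global_min (quad_loss n d k v x y) W)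
            \<and> (\<forall>Ws. is_saddle k d (quad_loss n d k v x y) Ws \<longrightarrow>
                    (\<exists>U. hessian_quad k d (quad_loss n d k v x y) Ws U < 0)))
       \<and> (\<exists>c::real. c > 0 \<and>
            (\<forall>(n::nat) (d::nat) (k::nat) (v::nat \<Rightarrow> real).
               k \<ge> 2 * d \<and> card {l. l < k \<and> v l > 0} \<ge> d \<and> card {l. l < k \<and> v l < 0} \<ge> d
               \<and> d \<le> n \<and> real n \<le> c * (real d)\<^sup>2 \<longrightarrow>
               (AE X in PiM ({..<n} \<times> {..<d}) (\<lambda>_. lborel).
                  \<forall>y::nat \<Rightarrow> real.
                    (\<exists>W. is_global_min (quad_loss n d k v (\<lambda>i j. X (i, j)) y) W
                         \<and> quad_loss n d k v (\<lambda>i j. X (i, j)) y W = 0))))"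
proof (rule conjI)
  show "\<forall>(n::nat) (d::nat) (k::nat) (v::nat \<Rightarrow> real) (x::nat \<Rightarrow> nat \<Rightarrow> real) (y::nat \<Rightarrow> real).
            k \<ge> 2 * d \<and> card {l. l < k \<and> v l > 0} \<ge> d \<and> card {l. l < k \<and> v l < 0} \<ge> d \<longrightarrow>
              (\<forall>W. is_local_min k d (quad_loss n d k v x y) W \<longrightarrow> is_global_min (quad_loss n d k v x y) W)
            \<and> (\<forall>Ws. is_saddle k d (quad_loss n d k v x y) Ws \<longrightarrow>
                    (\<exists>U. hessian_quad k d (quad_loss n d k v x y) Ws U < 0))"
    using part1 by blast
qed (rule part2)

end
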